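(* For every $r_0\in(0,1/2]$ there exist constants $c,C>0$ and $d_0$ (depending only on $r_0$) such that the following holds for all $d\ge d_0$. Let $[d]=I_0\sqcup I_1$ with $\min\{|I_0|,|I_1|\}\ge r_0d$, and fix $i^*\in I_1$. Let $p_{\mathrm{ex}}$ be the law of $x\in\{0,1\}^d$ generated as follows: $b\sim\mathrm{Bern}(1/2)$; $x^i=b$ for all $i\in I_0$; $x^i$, $i\in I_1\setminus\{i^*\}$, i.i.d. $\mathrm{Bern}(1/2)$ independent of $b$; and $x^{i^*}=(b+\sum_{i\in I_1\setminus\{i^*\}}x^i)\bmod 2$. Then $$cd\le\mathcal B(p_{\mathrm{ex}})\le Cd,\qquad cd\le\mathcal C(p_{\mathrm{ex}})\le Cd,\qquad \mathcal D(p_{\mathrm{ex}})\le C.$$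
   Context: For $x\sim q$ on $\{0,1\}^d$: total correlation $\mathcal C(q)=\sum_{i=1}^d\mathcal H(x^i)-\mathcal H(x)$ and dual total correlation $\mathcal B(q)=\mathcal H(x)-\sum_{i=1}^d\mathcal H(x^i\mid x^{-i})$ ($\mathcal H$ Shannon entropy, $x^{-i}$ is $x$ without coordinate $i$). Masking noising process from $q$: each coordinate independently is replaced by the symbol MASK at an Exp(1) time and stays masked; $x_t$ denotes the state at time $t$. $\mathcal I(t)=\sum_{i\neq j\in[d]}\mathrm I\big(x_t^i;x_t^j\mid (x_t^k)_{k\notin\{i,j\}}\big)$ (conditional mutual information, MASK treated as a symbol), and the effective total correlation is $\mathcal D(q)=\int_0^\infty\min(1,t)\,\mathcal I(t)\,dt$. *)

theory Defs
  imports "HOL-Probability.Probability"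
begin

text \<open>Coordinates of x in {0,1}^d are indexed by {..<d}; a state is a function
  nat => 'a (values outside {..<d} are irrelevant/constant). Entropy uses the natural
  logarithm (the choice of base only rescales the constants c, C).\<close>

definition shannon_entropy :: "'b pmf \<Rightarrow> real" where
  "shannon_entropy p = - (\<Sum>x\<in>set_pmf p. pmf p x * ln (pmf p x))"

definition marg :: "nat set \<Rightarrow> (nat \<Rightarrow> 'a) pmf \<Rightarrow> (nat \<Rightarrow> 'a) pmf" where
  "marg J p = map_pmf (\<lambda>x. restrict x J) p"

definition ent :: "nat set \<Rightarrow> (nat \<Rightarrow> 'a) pmf \<Rightarrow> real" where
  "ent J p = shannon_entropy (marg J p)"

definition cond_ent :: "nat set \<Rightarrow> nat set \<Rightarrow> (nat \<Rightarrow> 'a) pmf \<Rightarrow> real" where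
  "cond_ent J K p = ent (J \<union> K) p - ent K p"

definition cond_mi :: "nat \<Rightarrow> nat \<Rightarrow> nat set \<Rightarrow> (nat \<Rightarrow> 'a) pmf \<Rightarrow> real" where
  "cond_mi i j K p = cond_ent {i} K p - cond_ent {i} ({j} \<union> K) p"

definition total_corr :: "nat \<Rightarrow> (nat \<Rightarrow> 'a) pmf \<Rightarrow> real" where
  "total_corr d q = (\<Sum>i<d. ent {i} q) - ent {..<d} q"

definition dual_total_corr :: "nat \<Rightarrow> (nat \<Rightarrow> 'a) pmf \<Rightarrow> real" where
  "dual_total_corr d q = ent {..<d} q - (\<Sum>i<d. cond_ent {i} ({..<d} - {i}) q)"

text \<open>Masking noising process: each coordinate is independently masked (None = MASK)
  by time t with probability 1 - exp(-t) (Exp(1) masking time).\<close>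
definition mask :: "(nat \<Rightarrow> bool) \<Rightarrow> (nat \<Rightarrow> 'a) \<Rightarrow> (nat \<Rightarrow> 'a option)" where
  "mask M x = (\<lambda>i. if M i then None else Some (x i))"

definition noised :: "nat \<Rightarrow> real \<Rightarrow> (nat \<Rightarrow> 'a) pmf \<Rightarrow> (nat \<Rightarrow> 'a option) pmf" where
  "noised d t q = do {
     x \<leftarrow> q;
     M \<leftarrow> Pi_pmf {..<d} False (\<lambda>_. bernoulli_pmf (1 - exp (- t)));
     return_pmf (mask M x) }"

definition calI :: "nat \<Rightarrow> (nat \<Rightarrow> 'a) pmf \<Rightarrow> real \<Rightarrow> real" where
  "calI d q t = (\<Sum>i<d. \<Sum>j\<in>{..<d} - {i}. cond_mi i j ({..<d} - {i, j}) (noised d t q))"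

definition eff_total_corr :: "nat \<Rightarrow> (nat \<Rightarrow> 'a) pmf \<Rightarrow> ennreal" where
  "eff_total_corr d q = (\<integral>\<^sup>+ t \<in> {0<..}. ennreal (min 1 t * calI d q t) \<partial>lborel)"

text \<open>The example distribution p_ex (True = 1, False = 0).\<close>
definition p_ex :: "nat set \<Rightarrow> nat set \<Rightarrow> nat \<Rightarrow> (nat \<Rightarrow> bool) pmf" where
  "p_ex I0 I1 istar = do {
     b \<leftarrow> bernoulli_pmf (1/2);
     z \<leftarrow> Pi_pmf (I1 - {istar}) False (\<lambda>_. bernoulli_pmf (1/2));
     return_pmf (\<lambda>i. if i \<in> I0 then b
                     else if i = istar then (b \<noteq> odd (card {j \<in> I1 - {istar}. z j}))
                     else z i) }"

end

theory Submission
  imports Defs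
begin

lemma ent_map_inj:
  assumes "inj_on f (set_pmf p)"
  shows "shannon_entropy (map_pmf f p) = shannon_entropy p"
proof -
  have "shannon_entropy (map_pmf f p) = - (\<Sum>y\<in>f ` set_pmf p. pmf (map_pmf f p) y * ln (pmf (map_pmf f p) y))"
    by (simp add: shannon_entropy_def)
  also have "\<dots> = - (\<Sum>x\<in>set_pmf p. pmf (map_pmf f p) (f x) * ln (pmf (map_pmf f p) (f x)))"
    by (subst sum.reindex[OF assms]) simp
  also have "\<dots> = - (\<Sum>x\<in>set_pmf p. pmf p x * ln (pmf p x))"
    using pmf_map_inj[OF assms] by simp
  finally show ?thesis by (simp add: shannon_entropy_def)
qed

lemma pmf_bind_disj:
  assumes fin: "finite (set_pmf M)"
    and disj: "\<And>a b. a \<in> set_pmf M \<Longrightarrow> b \<in> set_pmf M \<Longrightarrow> a \<noteq> b \<Longrightarrow> set_pmf (N a) \<inter> set_pmf (N b) = {}"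
    and a: "a \<in> set_pmf M" and w: "w \<in> set_pmf (N a)"
  shows "pmf (bind_pmf M N) w = pmf M a * pmf (N a) w"
proof -
  have "pmf (bind_pmf M N) w = (\<Sum>x\<in>set_pmf M. pmf (N x) w * pmf M x)"
    unfolding pmf_bind by (rule integral_measure_pmf_real[OF fin]) auto
  also have "\<dots> = pmf (N a) w * pmf M a"
  proof -
    have "(\<Sum>x\<in>set_pmf M - {a}. pmf (N x) w * pmf M x) = 0"
    proof (rule sum.neutral, intro ballI)
      fix x assume "x \<in> set_pmf M - {a}"
      then have "x \<in> set_pmf M" "x \<noteq> a" by auto
      with disj[of x a] w have "w \<notin> set_pmf (N x)" using a by blast
      then show "pmf (N x) w * pmf M x = 0" by (simp add: set_pmf_eq)
    qed
    then show ?thesis by (simp add: sum.remove[OF fin a])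
  qed
  finally show ?thesis by simp
qed

lemma ent_bind_disj:
  assumes fin: "finite (set_pmf M)"
    and finN: "\<And>a. a \<in> set_pmf M \<Longrightarrow> finite (set_pmf (N a))"
    and disj: "\<And>a b. a \<in> set_pmf M \<Longrightarrow> b \<in> set_pmf M \<Longrightarrow> a \<noteq> b \<Longrightarrow> set_pmf (N a) \<inter> set_pmf (N b) = {}"
  shows "shannon_entropy (bind_pmf M N) = shannon_entropy M + (\<Sum>a\<in>set_pmf M. pmf M a * shannon_entropy (N a))"
proof -
  have "shannon_entropy (bind_pmf M N) = - (\<Sum>w\<in>(\<Union>a\<in>set_pmf M. set_pmf (N a)). pmf (bind_pmf M N) w * ln (pmf (bind_pmf M N) w))"
    by (simp add: shannon_entropy_def)
  also have "\<dots> = - (\<Sum>a\<in>set_pmf M. \<Sum>w\<in>set_pmf (N a). pmf (bind_pmf M N) w * ln (pmf (bind_pmf M N) w))"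
    by (subst sum.UNION_disjoint) (use fin finN disj in auto)
  also have "\<dots> = - (\<Sum>a\<in>set_pmf M. \<Sum>w\<in>set_pmf (N a). pmf M a * pmf (N a) w * (ln (pmf M a) + ln (pmf (N a) w)))"
    apply (intro arg_cong[where f=uminus] sum.cong refl)
    apply (subst pmf_bind_disj[OF fin disj], assumption+)+
    apply (subst ln_mult)
      apply (auto simp: set_pmf_eq pmf_nonneg less_le)
    done
  also have "\<dots> = - (\<Sum>a\<in>set_pmf M. pmf M a * ln (pmf M a) * (\<Sum>w\<in>set_pmf (N a). pmf (N a) w)
        + pmf M a * (\<Sum>w\<in>set_pmf (N a). pmf (N a) w * ln (pmf (N a) w)))"
    by (intro arg_cong[where f=uminus] sum.cong refl)
       (simp add: sum_distrib_left sum_distrib_right sum.distrib algebra_simps)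
  also have "\<dots> = - (\<Sum>a\<in>set_pmf M. pmf M a * ln (pmf M a)
        + pmf M a * (\<Sum>w\<in>set_pmf (N a). pmf (N a) w * ln (pmf (N a) w)))"
    by (intro arg_cong[where f=uminus] sum.cong refl) (simp add: sum_pmf_eq_1 finN)
  also have "\<dots> = shannon_entropy M + (\<Sum>a\<in>set_pmf M. pmf M a * shannon_entropy (N a))"
    by (simp add: shannon_entropy_def sum.distrib sum_negf)
  finally show ?thesis .
qed

lemma ent_return [simp]: "shannon_entropy (return_pmf x) = 0"
  by (simp add: shannon_entropy_def)

lemma finite_set_Pi_pmf:
  assumes "finite J" "\<And>x. x \<in> J \<Longrightarrow> finite (set_pmf (p x))"
  shows "finite (set_pmf (Pi_pmf J dflt p))"
proof (rule finite_subset[OF set_Pi_pmf_subset'[OF assms(1)]])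
  show "finite (PiE_dflt J dflt (set_pmf \<circ> p))"
    by (rule finite_PiE_dflt) (use assms in auto)
qed

lemma ent_Pi:
  assumes "finite J" "finite (set_pmf P)"
  shows "shannon_entropy (Pi_pmf J dflt (\<lambda>_. P)) = card J * shannon_entropy P"
  using assms(1)
proof (induction J rule: finite_induct)
  case empty
  then show ?case by simp
next
  case (insert x J)
  let ?Q = "Pi_pmf J dflt (\<lambda>_. P)"
  have finQ: "finite (set_pmf ?Q)"
    by (rule finite_set_Pi_pmf) (use insert assms in auto)
  have Qd: "\<And>f. f \<in> set_pmf ?Q \<Longrightarrow> f x = dflt"
    using set_Pi_pmf_subset[OF insert(1), of dflt "\<lambda>_. P"] insert(2) by blast
  have "Pi_pmf (insert x J) dflt (\<lambda>_. P) = bind_pmf P (\<lambda>y. map_pmf (\<lambda>f. f(x:=y)) ?Q)"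
    by (subst Pi_pmf_insert'[OF insert(1,2)]) (simp add: map_pmf_def)
  also have "shannon_entropy \<dots> = shannon_entropy P + (\<Sum>y\<in>set_pmf P. pmf P y * shannon_entropy (map_pmf (\<lambda>f. f(x:=y)) ?Q))"
  proof (rule ent_bind_disj[OF assms(2)])
    show "finite (set_pmf (map_pmf (\<lambda>f. f(x := y)) ?Q))" for y using finQ by simp
    show "set_pmf (map_pmf (\<lambda>f. f(x := a)) ?Q) \<inter> set_pmf (map_pmf (\<lambda>f. f(x := b)) ?Q) = {}"
      if "a \<noteq> b" for a b using that by (auto dest: fun_cong[where x=x])
  qed
  also have "(\<Sum>y\<in>set_pmf P. pmf P y * shannon_entropy (map_pmf (\<lambda>f. f(x:=y)) ?Q))
      = (\<Sum>y\<in>set_pmf P. pmf P y * shannon_entropy ?Q)"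
  proof (intro sum.cong refl arg_cong2[where f="(*)"] ent_map_inj)
    fix y show "inj_on (\<lambda>f. f(x := y)) (set_pmf ?Q)"
    proof (rule inj_onI)
      fix f g assume f: "f \<in> set_pmf ?Q" and g: "g \<in> set_pmf ?Q" and e: "f(x := y) = g(x := y)"
      show "f = g"
      proof
        fix z show "f z = g z"
          using Qd[OF f] Qd[OF g] fun_cong[OF e, of z] by (cases "z = x") auto
      qed
    qed
  qed
  also have "\<dots> = shannon_entropy ?Q"
    by (simp add: sum_distrib_right[symmetric] sum_pmf_eq_1 assms(2))
  finally show ?case using insert by (simp add: algebra_simps)
qed

lemma ent_bern_half: "shannon_entropy (bernoulli_pmf (1/2)) = ln 2"
  by (simp add: shannon_entropy_def UNIV_bool ln_div)


definition Hf :: "nat set \<Rightarrow> nat set \<Rightarrow> (nat \<Rightarrow> bool) \<Rightarrow> (nat \<Rightarrow> bool)" where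
  "Hf I0 I1 v = (\<lambda>i. if i \<in> I0 then odd (card {j\<in>I1. v j}) else v i)"

abbreviation U1 :: "nat set \<Rightarrow> (nat \<Rightarrow> bool) pmf" where
  "U1 I1 \<equiv> Pi_pmf I1 False (\<lambda>_. bernoulli_pmf (1/2))"

lemma bern_xor: "map_pmf (\<lambda>b. b \<noteq> c) (bernoulli_pmf (1/2)) = bernoulli_pmf (1/2)"
proof (rule pmf_eqI)
  fix x :: bool
  have inj: "inj (\<lambda>b::bool. b \<noteq> c)" by (auto simp: inj_def)
  have "x = ((x \<noteq> c) \<noteq> c)" by auto
  then have "pmf (map_pmf (\<lambda>b. b \<noteq> c) (bernoulli_pmf (1/2))) x
      = pmf (map_pmf (\<lambda>b. b \<noteq> c) (bernoulli_pmf (1/2))) ((\<lambda>b. b \<noteq> c) (x \<noteq> c))" by simp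
  also have "\<dots> = pmf (bernoulli_pmf (1/2)) (x \<noteq> c)" by (rule pmf_map_inj'[OF inj])
  finally show "pmf (map_pmf (\<lambda>b. b \<noteq> c) (bernoulli_pmf (1/2))) x = pmf (bernoulli_pmf (1/2)) x"
    by simp
qed

lemma card_upd_parity:
  assumes "finite I1" "k \<in> I1" "z k = False"
  shows "odd (card {j\<in>I1. (z(k:=y)) j}) = (y \<noteq> odd (card {j\<in>I1-{k}. z j}))"
proof -
  let ?S = "{j\<in>I1-{k}. z j}"
  have fS: "finite ?S" using assms(1) by simp
  have "{j\<in>I1. (z(k:=y)) j} = (if y then insert k ?S else ?S)"
    using assms by auto
  then show ?thesis using fS by auto
qed

lemma p_ex_repr:
  assumes fin: "finite I1" and k: "k \<in> I1" "k \<notin> I0"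
  shows "p_ex I0 I1 k = map_pmf (Hf I0 I1) (U1 I1)"
proof -
  let ?P = "Pi_pmf (I1 - {k}) False (\<lambda>_. bernoulli_pmf (1/2))"
  have I1eq: "I1 = insert k (I1 - {k})" using k by auto
  have "map_pmf (Hf I0 I1) (U1 I1) = map_pmf (Hf I0 I1) (Pi_pmf (insert k (I1 - {k})) False (\<lambda>_. bernoulli_pmf (1/2)))"
    using I1eq by simp
  also have "\<dots> = bind_pmf (bernoulli_pmf (1/2)) (\<lambda>y. bind_pmf ?P (\<lambda>f. return_pmf (Hf I0 I1 (f(k:=y)))))"
    by (subst Pi_pmf_insert') (use fin in \<open>auto simp: map_bind_pmf\<close>)
  also have "\<dots> = bind_pmf ?P (\<lambda>f. bind_pmf (bernoulli_pmf (1/2)) (\<lambda>y. return_pmf (Hf I0 I1 (f(k:=y)))))"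
    by (rule bind_commute_pmf)
  also have "\<dots> = bind_pmf ?P (\<lambda>z. bind_pmf (bernoulli_pmf (1/2)) (\<lambda>b. return_pmf
        (\<lambda>i. if i \<in> I0 then b else if i = k then (b \<noteq> odd (card {j \<in> I1 - {k}. z j})) else z i)))"
  proof (rule bind_pmf_cong[OF refl])
    fix z assume z: "z \<in> set_pmf ?P"
    have zk: "z k = False"
      using set_Pi_pmf_subset[of "I1 - {k}" False "\<lambda>_. bernoulli_pmf (1/2)"] fin z by auto
    define c where "c = odd (card {j \<in> I1 - {k}. z j})"
    have eq: "(\<lambda>i. if i \<in> I0 then b else if i = k then (b \<noteq> c) else z i) = Hf I0 I1 (z(k := (b \<noteq> c)))" for b
      unfolding Hf_def using card_upd_parity[of I1 k z "b \<noteq> c", OF fin k(1) zk] k(2)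
      by (auto simp: c_def fun_eq_iff)
    have "bind_pmf (bernoulli_pmf (1/2)) (\<lambda>y. return_pmf (Hf I0 I1 (z(k:=y))))
        = map_pmf (\<lambda>y. Hf I0 I1 (z(k:=y))) (map_pmf (\<lambda>b. b \<noteq> c) (bernoulli_pmf (1/2)))"
      by (subst bern_xor) (simp add: map_pmf_def)
    also have "\<dots> = bind_pmf (bernoulli_pmf (1/2)) (\<lambda>b. return_pmf (Hf I0 I1 (z(k := (b \<noteq> c)))))"
      by (simp add: map_pmf_comp map_pmf_def[symmetric])
    also have "\<dots> = bind_pmf (bernoulli_pmf (1/2)) (\<lambda>b. return_pmf
        (\<lambda>i. if i \<in> I0 then b else if i = k then (b \<noteq> c) else z i))"
      by (simp only: eq)
    finally show "bind_pmf (bernoulli_pmf (1/2)) (\<lambda>y. return_pmf (Hf I0 I1 (z(k:=y)))) =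
      bind_pmf (bernoulli_pmf (1/2)) (\<lambda>b. return_pmf
        (\<lambda>i. if i \<in> I0 then b else if i = k then (b \<noteq> odd (card {j \<in> I1 - {k}. z j})) else z i))"
      unfolding c_def .
  qed
  also have "\<dots> = p_ex I0 I1 k"
    unfolding p_ex_def by (rule bind_commute_pmf[symmetric])
  finally show ?thesis ..
qed


definition rk :: "nat set \<Rightarrow> nat set \<Rightarrow> nat set \<Rightarrow> nat" where
  "rk I0 I1 S = min (card I1) (card (S \<inter> I1) + (if S \<inter> I0 = {} then 0 else 1))"

lemma ent_U1: "finite J \<Longrightarrow> shannon_entropy (U1 J) = card J * ln 2"
  using ent_Pi[of J "bernoulli_pmf (1/2)" False] by (simp add: ent_bern_half)

lemma U1_False: "finite J \<Longrightarrow> v \<in> set_pmf (U1 J) \<Longrightarrow> x \<notin> J \<Longrightarrow> v x = False"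
  using set_Pi_pmf_subset[of J False "\<lambda>_. bernoulli_pmf (1/2)"] by auto

lemma marg_map: "marg S (map_pmf f p) = map_pmf (\<lambda>v. restrict (f v) S) p"
  by (simp add: marg_def map_pmf_comp)

lemma ent_full:
  assumes fin: "finite I1" and dis: "I0 \<inter> I1 = {}" and k: "k \<in> I1" and S: "I1 \<subseteq> S"
  shows "ent S (p_ex I0 I1 k) = card I1 * ln 2"
proof -
  have "ent S (p_ex I0 I1 k) = shannon_entropy (map_pmf (\<lambda>v. restrict (Hf I0 I1 v) S) (U1 I1))"
  proof -
    have "k \<notin> I0" using dis k by auto
    then show ?thesis unfolding ent_def using p_ex_repr[OF fin k] by (simp add: marg_map)
  qed
  also have "\<dots> = shannon_entropy (U1 I1)"
  proof (rule ent_map_inj, rule inj_onI)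
    fix v w assume v: "v \<in> set_pmf (U1 I1)" and w: "w \<in> set_pmf (U1 I1)"
      and e: "restrict (Hf I0 I1 v) S = restrict (Hf I0 I1 w) S"
    show "v = w"
    proof
      fix x show "v x = w x"
      proof (cases "x \<in> I1")
        case True
        then have "x \<in> S" "x \<notin> I0" using S dis by auto
        then show ?thesis using fun_cong[OF e, of x] by (simp add: Hf_def)
      next
        case False
        then show ?thesis using U1_False[OF fin v] U1_False[OF fin w] by simp
      qed
    qed
  qed
  also have "\<dots> = card I1 * ln 2" by (rule ent_U1[OF fin])
  finally show ?thesis .
qed

lemma marg_p_ex_free:
  assumes fin: "finite I1" and k: "k \<in> I1" "k \<notin> S"
  shows "marg S (p_ex I0 I1 k) = map_pmf (\<lambda>v. restrict (\<lambda>i. if i \<in> I0 then v k else v i) S) (U1 I1)"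
proof -
  let ?P = "Pi_pmf (I1 - {k}) False (\<lambda>_. bernoulli_pmf (1/2))"
  have I1eq: "I1 = insert k (I1 - {k})" using k by auto
  have "map_pmf (\<lambda>v. restrict (\<lambda>i. if i \<in> I0 then v k else v i) S) (U1 I1)
     = map_pmf (\<lambda>v. restrict (\<lambda>i. if i \<in> I0 then v k else v i) S) (Pi_pmf (insert k (I1 - {k})) False (\<lambda>_. bernoulli_pmf (1/2)))"
    using I1eq by simp
  also have "\<dots> = bind_pmf (bernoulli_pmf (1/2)) (\<lambda>b. bind_pmf ?P (\<lambda>z. return_pmf
       (restrict (\<lambda>i. if i \<in> I0 then (z(k:=b)) k else (z(k:=b)) i) S)))"
    by (subst Pi_pmf_insert') (use fin in \<open>auto simp: map_bind_pmf\<close>)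
  also have "\<dots> = marg S (p_ex I0 I1 k)"
    unfolding p_ex_def marg_def map_bind_pmf map_return_pmf
    by (intro bind_pmf_cong refl arg_cong[where f=return_pmf]) (use k in \<open>auto simp: fun_eq_iff restrict_def\<close>)
  finally show ?thesis ..
qed

lemma ent_free:
  assumes fin: "finite I1" and dis: "I0 \<inter> I1 = {}" and k: "k \<in> I1" "k \<notin> S"
    and Sd: "S \<subseteq> I0 \<union> I1"
  shows "ent S (p_ex I0 I1 k) = (card (S \<inter> I1) + (if S \<inter> I0 = {} then 0 else 1)) * ln 2"
proof -
  define J where "J = S \<inter> I1 \<union> (if S \<inter> I0 = {} then {} else {k})"
  define G where "G = (\<lambda>v::nat\<Rightarrow>bool. restrict (\<lambda>i. if i \<in> I0 then v k else v i) S)"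
  have JI1: "J \<subseteq> I1" using k by (auto simp: J_def)
  have finJ: "finite J" using JI1 fin finite_subset by blast
  have "U1 J = map_pmf (\<lambda>f x. if x \<in> J then f x else False) (U1 I1)"
    by (rule Pi_pmf_subset[OF fin JI1])
  have "ent S (p_ex I0 I1 k) = shannon_entropy (map_pmf G (U1 I1))"
    unfolding ent_def using marg_p_ex_free[OF fin k] by (simp add: G_def)
  also have "map_pmf G (U1 I1) = map_pmf G (map_pmf (\<lambda>f x. if x \<in> J then f x else False) (U1 I1))"
    unfolding map_pmf_comp
    by (intro map_pmf_cong refl) (use Sd in \<open>auto simp: G_def J_def restrict_def fun_eq_iff\<close>)
  also have "\<dots> = map_pmf G (U1 J)"
    by (simp add: Pi_pmf_subset[OF fin JI1])
  also have "shannon_entropy \<dots> = shannon_entropy (U1 J)"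
  proof (rule ent_map_inj, rule inj_onI)
    fix v w assume v: "v \<in> set_pmf (U1 J)" and w: "w \<in> set_pmf (U1 J)"
      and e: "G v = G w"
    show "v = w"
    proof
      fix x show "v x = w x"
      proof (cases "x \<in> J")
        case True
        show ?thesis
        proof (cases "x \<in> S \<inter> I1")
          case True
          then have "x \<notin> I0" using dis by auto
          then show ?thesis using True fun_cong[OF e, of x] by (simp add: G_def)
        next
          case False
          with \<open>x \<in> J\<close> obtain i0 where "i0 \<in> S" "i0 \<in> I0" "x = k"
            by (auto simp: J_def split: if_splits)
          then show ?thesis using fun_cong[OF e, of i0] by (simp add: G_def)
        qed
      next
        case False
        then show ?thesis using U1_False[OF finJ v] U1_False[OF finJ w] by simp
      qed
    qed
  qed
  also have "\<dots> = card J * ln 2" by (rule ent_U1[OF finJ])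
  also have "card J = card (S \<inter> I1) + (if S \<inter> I0 = {} then 0 else 1)"
    using k fin by (auto simp: J_def)
  finally show ?thesis by simp
qed

lemma ent_rank:
  assumes fin: "finite I1" and dis: "I0 \<inter> I1 = {}" and k: "istar \<in> I1"
    and Sd: "S \<subseteq> I0 \<union> I1"
  shows "ent S (p_ex I0 I1 istar) = rk I0 I1 S * ln 2"
proof (cases "I1 \<subseteq> S")
  case True
  then have "rk I0 I1 S = card I1" by (simp add: rk_def Int_absorb1)
  then show ?thesis using ent_full[OF fin dis k True] by simp
next
  case False
  then obtain k' where k': "k' \<in> I1" "k' \<notin> S" by auto
  have eq: "p_ex I0 I1 istar = p_ex I0 I1 k'"
  proof -
    have "istar \<notin> I0" "k' \<notin> I0" using dis k k' by auto
    then show ?thesis using p_ex_repr[OF fin k] p_ex_repr[OF fin k'(1)] by simp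
  qed
  have "card (S \<inter> I1) < card I1"
    using k' fin by (intro psubset_card_mono) auto
  then have "rk I0 I1 S = card (S \<inter> I1) + (if S \<inter> I0 = {} then 0 else 1)"
    by (simp add: rk_def)
  then show ?thesis using ent_free[OF fin dis k' Sd] eq by simp
qed


lemma corr_values:
  assumes U: "I0 \<union> I1 = {..<d}" and dis: "I0 \<inter> I1 = {}" and k: "istar \<in> I1" and ne: "I0 \<noteq> {}"
  shows "total_corr d (p_ex I0 I1 istar) = card I0 * ln 2"
    and "dual_total_corr d (p_ex I0 I1 istar) = card I1 * ln 2"
proof -
  have fin1: "finite I1" and fin0: "finite I0" using U by (metis finite_Un finite_lessThan)+
  have m1: "card I1 \<ge> 1" using k fin1 by (metis One_nat_def Suc_leI card_gt_0_iff empty_iff)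
  have dsum: "d = card I0 + card I1"
    using card_Un_disjoint[OF fin0 fin1 dis] U by simp
  have e1: "ent {i} (p_ex I0 I1 istar) = ln 2" if "i < d" for i
  proof -
    have "rk I0 I1 {i} = 1"
    proof (cases "i \<in> I1")
      case True
      then have "{i} \<inter> I1 = {i}" "{i} \<inter> I0 = {}" using dis True by blast+
      then have "card ({i} \<inter> I1) = 1" "({i} \<inter> I0 = {}) = True" by auto
      then show ?thesis unfolding rk_def using m1 by (simp only: if_True)
    next
      case False
      have "i \<in> I0" using U that False by (metis UnE lessThan_iff)
      then have "card ({i} \<inter> I1) = 0" "({i} \<inter> I0 = {}) = False" using False by auto
      then show ?thesis unfolding rk_def using m1 by (simp only: if_False)
    qed
    moreover have "{i} \<subseteq> I0 \<union> I1" using U that by blast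
    ultimately show ?thesis using ent_rank[OF fin1 dis k, of "{i}"] by simp
  qed
  have ed: "ent {..<d} (p_ex I0 I1 istar) = card I1 * ln 2"
  proof -
    have "{..<d} \<inter> I1 = I1" using U by blast
    then have "rk I0 I1 {..<d} = card I1" by (simp add: rk_def)
    moreover have "{..<d} \<subseteq> I0 \<union> I1" using U by blast
    ultimately show ?thesis using ent_rank[OF fin1 dis k, of "{..<d}"] by simp
  qed
  have edi: "ent ({..<d} - {i}) (p_ex I0 I1 istar) = card I1 * ln 2" if "i < d" for i
  proof -
    have "rk I0 I1 ({..<d} - {i}) = card I1"
    proof (cases "i \<in> I1")
      case True
      then have "({..<d} - {i}) \<inter> I1 = I1 - {i}" using U by blast
      moreover have "({..<d} - {i}) \<inter> I0 \<noteq> {}" using ne U dis True by blast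
      ultimately show ?thesis using True fin1 m1 by (simp add: rk_def)
    next
      case False
      then have "({..<d} - {i}) \<inter> I1 = I1" using U by blast
      then show ?thesis by (simp add: rk_def)
    qed
    moreover have "{..<d} - {i} \<subseteq> I0 \<union> I1" using U by blast
    ultimately show ?thesis using ent_rank[OF fin1 dis k, of "{..<d} - {i}"] by simp
  qed
  show "total_corr d (p_ex I0 I1 istar) = card I0 * ln 2"
    unfolding total_corr_def using e1 ed dsum by (simp add: algebra_simps)
  have "cond_ent {i} ({..<d} - {i}) (p_ex I0 I1 istar) = 0" if "i < d" for i
  proof -
    have "{i} \<union> ({..<d} - {i}) = {..<d}" using that by auto
    then show ?thesis unfolding cond_ent_def using ed edi[OF that] by simp
  qed
  then show "dual_total_corr d (p_ex I0 I1 istar) = card I1 * ln 2"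
    unfolding dual_total_corr_def using ed by simp
qed


abbreviation Pq :: "real \<Rightarrow> nat set \<Rightarrow> (nat \<Rightarrow> bool) pmf" where
  "Pq q A \<equiv> Pi_pmf A False (\<lambda>_. bernoulli_pmf q)"

definition SA :: "real \<Rightarrow> nat set \<Rightarrow> (nat set \<Rightarrow> real) \<Rightarrow> real" where
  "SA q A \<phi> = (\<Sum>m\<in>set_pmf (Pq q A). pmf (Pq q A) m * \<phi> (A - {j. m j}))"

lemma marg_noised:
  assumes A: "A \<subseteq> {..<d}"
  shows "marg A (noised d t p) =
    bind_pmf (Pq (1 - exp (- t)) A) (\<lambda>m. map_pmf (\<lambda>x. restrict (mask m x) A) p)"
proof -
  let ?q = "1 - exp (- t)"
  let ?M = "Pq ?q {..<d}"
  have "marg A (noised d t p) = bind_pmf p (\<lambda>x. bind_pmf ?M (\<lambda>m. return_pmf (restrict (mask m x) A)))"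
    unfolding marg_def noised_def by (simp add: map_bind_pmf)
  also have "\<dots> = bind_pmf ?M (\<lambda>m. bind_pmf p (\<lambda>x. return_pmf (restrict (mask m x) A)))"
    by (rule bind_commute_pmf)
  also have "\<dots> = bind_pmf (map_pmf (\<lambda>f x. if x \<in> A then f x else False) ?M)
      (\<lambda>m. map_pmf (\<lambda>x. restrict (mask m x) A) p)"
    unfolding bind_map_pmf
  proof (rule bind_pmf_cong[OF refl])
    fix m :: "nat \<Rightarrow> bool"
    show "bind_pmf p (\<lambda>x. return_pmf (restrict (mask m x) A)) =
      map_pmf (\<lambda>x. restrict (mask (\<lambda>x. if x \<in> A then m x else False) x) A) p"
      unfolding map_pmf_def
      by (intro bind_pmf_cong refl arg_cong[where f=return_pmf]) (auto simp: restrict_def mask_def fun_eq_iff)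
  qed
  also have "map_pmf (\<lambda>f x. if x \<in> A then f x else False) ?M = Pq ?q A"
    by (rule Pi_pmf_subset[symmetric]) (use A in auto)
  finally show ?thesis .
qed

lemma finite_Pq: "finite A \<Longrightarrow> finite (set_pmf (Pq q A))"
  by (rule finite_set_Pi_pmf) auto

lemma Pq_False: "finite A \<Longrightarrow> m \<in> set_pmf (Pq q A) \<Longrightarrow> x \<notin> A \<Longrightarrow> m x = False"
  using set_Pi_pmf_subset[of A False "\<lambda>_. bernoulli_pmf q"] by auto

lemma ent_noised:
  assumes A: "A \<subseteq> {..<d}" and finp: "finite (set_pmf p)"
  shows "ent A (noised d t p) = shannon_entropy (Pq (1 - exp (- t)) A) + SA (1 - exp (- t)) A (\<lambda>U. ent U p)"
proof -
  let ?q = "1 - exp (- t)"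
  have finA: "finite A" using A finite_subset by blast
  have "ent A (noised d t p) = shannon_entropy (bind_pmf (Pq ?q A) (\<lambda>m. map_pmf (\<lambda>x. restrict (mask m x) A) p))"
    unfolding ent_def marg_noised[OF A] ..
  also have "\<dots> = shannon_entropy (Pq ?q A) + (\<Sum>m\<in>set_pmf (Pq ?q A). pmf (Pq ?q A) m *
      shannon_entropy (map_pmf (\<lambda>x. restrict (mask m x) A) p))"
  proof (rule ent_bind_disj[OF finite_Pq[OF finA]])
    show "finite (set_pmf (map_pmf (\<lambda>x. restrict (mask m x) A) p))" for m using finp by simp
    fix m m' assume m: "m \<in> set_pmf (Pq ?q A)" and m': "m' \<in> set_pmf (Pq ?q A)" and ne: "m \<noteq> m'"
    then obtain i where i: "m i \<noteq> m' i" by auto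
    then have iA: "i \<in> A" using Pq_False[OF finA m] Pq_False[OF finA m'] by auto
    show "set_pmf (map_pmf (\<lambda>x. restrict (mask m x) A) p) \<inter> set_pmf (map_pmf (\<lambda>x. restrict (mask m' x) A) p) = {}"
    proof -
      have "restrict (mask m x) A \<noteq> restrict (mask m' x') A" for x x'
      proof
        assume "restrict (mask m x) A = restrict (mask m' x') A"
        from fun_cong[OF this, of i] show False using iA i by (auto simp: mask_def split: if_splits)
      qed
      then show ?thesis by auto
    qed
  qed
  also have "(\<Sum>m\<in>set_pmf (Pq ?q A). pmf (Pq ?q A) m * shannon_entropy (map_pmf (\<lambda>x. restrict (mask m x) A) p))
      = SA ?q A (\<lambda>U. ent U p)"
    unfolding SA_def
  proof (intro sum.cong refl arg_cong2[where f="(*)"])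
    fix m
    let ?A' = "A - {j. m j}"
    define g where "g = (\<lambda>y::nat\<Rightarrow>'a. restrict (\<lambda>i. if m i then None else Some (y i)) A)"
    have "map_pmf (\<lambda>x. restrict (mask m x) A) p = map_pmf g (marg ?A' p)"
      unfolding marg_def map_pmf_comp
      by (intro map_pmf_cong refl) (auto simp: g_def mask_def restrict_def fun_eq_iff)
    also have "shannon_entropy \<dots> = shannon_entropy (marg ?A' p)"
    proof (rule ent_map_inj, rule inj_onI)
      fix y y' assume y: "y \<in> set_pmf (marg ?A' p)" and y': "y' \<in> set_pmf (marg ?A' p)" and e: "g y = g y'"
      from y obtain x where x: "y = restrict x ?A'" by (auto simp: marg_def)
      from y' obtain x' where x': "y' = restrict x' ?A'" by (auto simp: marg_def)
      show "y = y'"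
      proof
        fix i show "y i = y' i"
        proof (cases "i \<in> ?A'")
          case True
          then show ?thesis using fun_cong[OF e, of i] by (auto simp: g_def)
        next
          case False
          have "y i = undefined" "y' i = undefined" using x x' False by (simp_all only: restrict_apply' restrict_def if_False)
          then show ?thesis by simp
        qed
      qed
    qed
    finally show "shannon_entropy (map_pmf (\<lambda>x. restrict (mask m x) A) p) = ent ?A' p"
      by (simp add: ent_def)
  qed
  finally show ?thesis .
qed


lemma sum_map_inj:
  assumes "inj_on f (set_pmf M)"
  shows "(\<Sum>x\<in>set_pmf (map_pmf f M). pmf (map_pmf f M) x * h x) = (\<Sum>x\<in>set_pmf M. pmf M x * h (f x))"
  using assms by (simp add: sum.reindex pmf_map_inj)

lemma SA_empty: "SA q {} \<phi> = \<phi> {}"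
  by (simp add: SA_def)

lemma SA_insert:
  assumes finA: "finite A" and i: "i \<notin> A" and q: "0 < q" "q < 1"
  shows "SA q (insert i A) \<phi> = SA q A (\<lambda>U. q * \<phi> U + (1 - q) * \<phi> (insert i U))"
proof -
  let ?f = "\<lambda>(y::bool, g::nat\<Rightarrow>bool). g(i:=y)"
  let ?M = "pair_pmf (bernoulli_pmf q) (Pq q A)"
  have inj: "inj_on ?f (set_pmf ?M)"
  proof (rule inj_onI)
    fix a b assume a: "a \<in> set_pmf ?M" and b: "b \<in> set_pmf ?M" and e0: "?f a = ?f b"
    obtain y g where ab: "a = (y, g)" by (cases a)
    obtain y' g' where bb: "b = (y', g')" by (cases b)
    have g: "g \<in> set_pmf (Pq q A)" and g': "g' \<in> set_pmf (Pq q A)" using a b ab bb by auto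
    have e: "g(i := y) = g'(i := y')" using e0 ab bb by simp
    have "y = y'" using fun_cong[OF e, of i] by simp
    moreover have "g = g'"
    proof
      fix x show "g x = g' x"
        using fun_cong[OF e, of x] Pq_False[OF finA g, of i] Pq_False[OF finA g', of i] i
        by (cases "x = i") auto
    qed
    ultimately show "a = b" using ab bb by simp
  qed
  have "SA q (insert i A) \<phi> = (\<Sum>x\<in>set_pmf (map_pmf ?f ?M). pmf (map_pmf ?f ?M) x * \<phi> (insert i A - {j. x j}))"
    unfolding SA_def Pi_pmf_insert[OF finA i] ..
  also have "\<dots> = (\<Sum>x\<in>set_pmf ?M. pmf ?M x * \<phi> (insert i A - {j. ?f x j}))"
    by (rule sum_map_inj[OF inj])
  also have "\<dots> = (\<Sum>y\<in>UNIV. \<Sum>g\<in>set_pmf (Pq q A). pmf (bernoulli_pmf q) y * pmf (Pq q A) g * \<phi> (insert i A - {j. (g(i:=y)) j}))"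
    using q unfolding sum.cartesian_product set_pair_pmf
    by (intro sum.cong refl) (auto simp: pmf_pair fun_upd_def split: prod.splits)
  also have "\<dots> = (\<Sum>g\<in>set_pmf (Pq q A). q * (pmf (Pq q A) g * \<phi> (A - {j. g j}))
      + (1 - q) * (pmf (Pq q A) g * \<phi> (insert i (A - {j. g j}))))"
  proof -
    have e1: "insert i A - {j. (g(i:=True)) j} = A - {j. g j}" for g using i by auto
    have e2: "insert i A - {j. (g(i:=False)) j} = insert i (A - {j. g j})" for g using i by auto
    have u: "(\<Sum>y\<in>(UNIV::bool set). F y) = F True + F False" for F :: "bool \<Rightarrow> real"
      by (simp add: UNIV_bool)
    show ?thesis unfolding u e1 e2 using q
      by (simp add: sum.distrib[symmetric] algebra_simps)
  qed
  also have "\<dots> = SA q A (\<lambda>U. q * \<phi> U + (1 - q) * \<phi> (insert i U))"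
    unfolding SA_def by (intro sum.cong refl) (simp add: algebra_simps)
  finally show ?thesis .
qed

lemma SA_lin: "SA q A (\<lambda>U. a * \<phi> U + b * \<psi> U) = a * SA q A \<phi> + b * SA q A \<psi>"
  by (simp add: SA_def sum.distrib sum_distrib_left algebra_simps)

lemma SA_diff: "SA q A (\<lambda>U. \<phi> U - \<psi> U) = SA q A \<phi> - SA q A \<psi>"
  by (simp add: SA_def sum_subtractf algebra_simps)

lemma SA_add: "SA q A (\<lambda>U. \<phi> U + \<psi> U) = SA q A \<phi> + SA q A \<psi>"
  by (simp add: SA_def sum.distrib algebra_simps)

lemma SA_cmult: "SA q A (\<lambda>U. a * \<phi> U) = a * SA q A \<phi>"
  by (simp add: SA_def sum_distrib_left algebra_simps)

lemma SA_mono: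
  assumes "finite A" "\<And>U. U \<subseteq> A \<Longrightarrow> \<phi> U \<le> \<psi> U"
  shows "SA q A \<phi> \<le> SA q A \<psi>"
  unfolding SA_def by (intro sum_mono mult_left_mono) (use assms in auto)

lemma SA_cong:
  assumes "\<And>U. U \<subseteq> A \<Longrightarrow> \<phi> U = \<psi> U"
  shows "SA q A \<phi> = SA q A \<psi>"
  unfolding SA_def by (intro sum.cong refl) (use assms in auto)

lemma SA_disjoint:
  assumes "finite A" "0 < q" "q < 1"
  shows "SA q A (\<lambda>U. if U \<inter> L = {} then 1 else 0) = q ^ card (A \<inter> L)"
  using assms(1)
proof (induction A rule: finite_induct)
  case empty
  then show ?case by (simp add: SA_empty)
next
  case (insert i A)
  show ?case
  proof (cases "i \<in> L")
    case True
    have "SA q (insert i A) (\<lambda>U. if U \<inter> L = {} then 1 else 0) = SA q A (\<lambda>U. q * (if U \<inter> L = {} then 1 else 0))"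
      using True by (simp add: SA_insert[OF insert(1,2) assms(2,3)])
    also have "\<dots> = q * q ^ card (A \<inter> L)" by (simp add: SA_cmult insert.IH)
    finally have "SA q (insert i A) (\<lambda>U. if U \<inter> L = {} then 1 else 0) = q * q ^ card (A \<inter> L)" .
    moreover have "card (insert i A \<inter> L) = Suc (card (A \<inter> L))"
      using True insert by simp
    ultimately show ?thesis by simp
  next
    case False
    have "SA q (insert i A) (\<lambda>U. if U \<inter> L = {} then 1 else 0) = SA q A (\<lambda>U. (if U \<inter> L = {} then 1 else 0))"
      using False by (simp add: SA_insert[OF insert(1,2) assms(2,3)] algebra_simps)
    then show ?thesis using False insert by simp
  qed
qed

lemma SA_subset:
  assumes "finite A" "0 < q" "q < 1" "finite L"
  shows "SA q A (\<lambda>U. if L \<subseteq> U then 1 else 0) = (if L \<subseteq> A then (1 - q) ^ card L else 0)"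
  using assms(1,4)
proof (induction A arbitrary: L rule: finite_induct)
  case empty
  then show ?case by (simp add: SA_empty)
next
  case (insert i A)
  show ?case
  proof (cases "i \<in> L")
    case True
    have "SA q (insert i A) (\<lambda>U. if L \<subseteq> U then 1 else 0)
        = SA q A (\<lambda>U. q * (if L \<subseteq> U then 1 else 0) + (1 - q) * (if L - {i} \<subseteq> U then 1 else 0))"
      by (subst SA_insert[OF insert(1,2) assms(2,3)]) (intro SA_cong, use True in auto)
    also have "\<dots> = q * (if L \<subseteq> A then (1 - q) ^ card L else 0) + (1 - q) * (if L - {i} \<subseteq> A then (1 - q) ^ card (L - {i}) else 0)"
      using insert by (simp add: SA_lin)
    also have "\<dots> = (if L \<subseteq> insert i A then (1 - q) ^ card L else 0)"
    proof -
      have "\<not> L \<subseteq> A" using True insert(2) by auto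
      moreover have "(L - {i} \<subseteq> A) = (L \<subseteq> insert i A)" using True by auto
      moreover have "card L = Suc (card (L - {i}))" using True insert(4)
        by (metis card_Suc_Diff1)
      ultimately show ?thesis by simp
    qed
    finally show ?thesis .
  next
    case False
    have "SA q (insert i A) (\<lambda>U. if L \<subseteq> U then 1 else 0)
        = SA q A (\<lambda>U. q * (if L \<subseteq> U then 1 else 0) + (1 - q) * (if L \<subseteq> U then 1 else 0))"
      by (subst SA_insert[OF insert(1,2) assms(2,3)]) (intro SA_cong, use False in auto)
    also have "\<dots> = (if L \<subseteq> A then (1 - q) ^ card L else 0)"
      using insert by (simp add: SA_lin algebra_simps)
    also have "(L \<subseteq> A) = (L \<subseteq> insert i A)" using False by auto
    finally show ?thesis .
  qed
qed


lemma ent_Pq: "finite A \<Longrightarrow> shannon_entropy (Pq q A) = card A * shannon_entropy (bernoulli_pmf q)"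
  by (rule ent_Pi) (auto intro: finite_subset[of _ "UNIV :: bool set"])

lemma cond_mi_noised:
  assumes ij: "i < d" "j < d" "i \<noteq> j" and K: "K = {..<d} - {i, j}"
    and finp: "finite (set_pmf p)" and t: "0 < t"
  shows "cond_mi i j K (noised d t p) = SA (1 - exp (- t)) K (\<lambda>U. (exp (- t))\<^sup>2 *
      (ent (insert i U) p + ent (insert j U) p - ent U p - ent (insert i (insert j U)) p))"
proof -
  define q where "q = 1 - exp (- t)"
  have q: "0 < q" "q < 1" using t by (auto simp: q_def)
  have s: "exp (- t) = 1 - q" by (simp add: q_def)
  define h where "h = shannon_entropy (bernoulli_pmf q)"
  have finK: "finite K" using K by simp
  have iK: "i \<notin> K" and jK: "j \<notin> K" and ijK: "i \<notin> insert j K" using K ij by auto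
  have sub: "K \<subseteq> {..<d}" "insert i K \<subseteq> {..<d}" "insert j K \<subseteq> {..<d}" "insert i (insert j K) \<subseteq> {..<d}"
    using K ij by auto
  let ?e = "\<lambda>U. ent U p"
  have E: "ent A (noised d t p) = card A * h + SA q A ?e" if "A \<subseteq> {..<d}" for A
    using ent_noised[OF that finp, of t] ent_Pq[of A q] finite_subset[OF that]
    by (simp add: q_def h_def)
  have c: "card (insert i K) = card K + 1" "card (insert j K) = card K + 1"
    "card (insert i (insert j K)) = card K + 2"
    using finK iK jK ijK by auto
  have S1: "SA q (insert i K) ?e = SA q K (\<lambda>U. q * ?e U + (1 - q) * ?e (insert i U))"
    by (rule SA_insert[OF finK iK q])
  have S2: "SA q (insert j K) ?e = SA q K (\<lambda>U. q * ?e U + (1 - q) * ?e (insert j U))"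
    by (rule SA_insert[OF finK jK q])
  have S3: "SA q (insert i (insert j K)) ?e = SA q K (\<lambda>U. q * (q * ?e U + (1 - q) * ?e (insert i U))
      + (1 - q) * (q * ?e (insert j U) + (1 - q) * ?e (insert i (insert j U))))"
    using SA_insert[OF _ ijK q, of ?e] SA_insert[OF finK jK q] finK by simp
  have "cond_mi i j K (noised d t p) = (ent (insert i K) (noised d t p) - ent K (noised d t p))
      - (ent (insert i (insert j K)) (noised d t p) - ent (insert j K) (noised d t p))"
  proof -
    have "{i} \<union> ({j} \<union> K) = insert i (insert j K)" "{i} \<union> K = insert i K" "{j} \<union> K = insert j K" by auto
    then show ?thesis unfolding cond_mi_def cond_ent_def by simp
  qed
  also have "\<dots> = (SA q (insert i K) ?e - SA q K ?e) - (SA q (insert i (insert j K)) ?e - SA q (insert j K) ?e)"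
    using E[OF sub(1)] E[OF sub(2)] E[OF sub(3)] E[OF sub(4)] c by (simp add: algebra_simps)
  also have "\<dots> = SA q K (\<lambda>U. ((q * ?e U + (1 - q) * ?e (insert i U)) - ?e U)
      - ((q * (q * ?e U + (1 - q) * ?e (insert i U))
      + (1 - q) * (q * ?e (insert j U) + (1 - q) * ?e (insert i (insert j U)))) - (q * ?e U + (1 - q) * ?e (insert j U))))"
    unfolding S1 S2 S3 SA_diff ..
  also have "\<dots> = SA q K (\<lambda>U. (1 - q)\<^sup>2 *
      (?e (insert i U) + ?e (insert j U) - ?e U - ?e (insert i (insert j U))))"
    by (intro SA_cong) (simp add: power2_eq_square algebra_simps)
  finally show ?thesis by (simp add: q_def)
qed


lemma rk_arith:
  fixes m a :: nat
  assumes "a + of_bool bi + of_bool bj \<le> m"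
  shows "real (min m (a + of_bool bi + of_bool (e \<or> \<not> bi))) + real (min m (a + of_bool bj + of_bool (e \<or> \<not> bj)))
    - real (min m (a + of_bool e)) - real (min m (a + of_bool bi + of_bool bj + of_bool (e \<or> \<not> bi \<or> \<not> bj)))
    \<le> of_bool (\<not> e) + of_bool (m \<le> a + of_bool bi + of_bool bj)"
  using assms by (cases e; cases bi; cases bj) (auto simp: min_def)

lemma rk_insert:
  assumes fin: "finite I1" and i: "i \<notin> U" and cov: "i \<in> I0 \<union> I1" and dis: "I0 \<inter> I1 = {}"
  shows "rk I0 I1 (insert i U) = min (card I1) (card (U \<inter> I1) + of_bool (i \<in> I1) + of_bool (U \<inter> I0 \<noteq> {} \<or> i \<notin> I1))"
proof -
  have "card (insert i U \<inter> I1) = card (U \<inter> I1) + of_bool (i \<in> I1)"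
  proof (cases "i \<in> I1")
    case True
    then have "insert i U \<inter> I1 = insert i (U \<inter> I1)" by auto
    then show ?thesis using True i fin by simp
  next
    case False
    then have "insert i U \<inter> I1 = U \<inter> I1" by auto
    then show ?thesis using False by simp
  qed
  moreover have "(insert i U \<inter> I0 = {}) = (U \<inter> I0 = {} \<and> i \<in> I1)" using cov dis by blast
  ultimately show ?thesis unfolding rk_def by simp
qed

lemma Ic_bound:
  assumes U0: "I0 \<union> I1 = {..<d}" and dis: "I0 \<inter> I1 = {}" and k: "istar \<in> I1"
    and ij: "i < d" "j < d" "i \<noteq> j" and U: "U \<subseteq> {..<d} - {i, j}"
  shows "ent (insert i U) (p_ex I0 I1 istar) + ent (insert j U) (p_ex I0 I1 istar) - ent U (p_ex I0 I1 istar)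
      - ent (insert i (insert j U)) (p_ex I0 I1 istar)
    \<le> ln 2 * ((if U \<inter> I0 = {} then 1 else 0) + (if I1 - {i, j} \<subseteq> U then 1 else 0))"
proof -
  have fin1: "finite I1" using U0 by (metis finite_Un finite_lessThan)
  let ?m = "card I1" and ?a = "card (U \<inter> I1)" and ?e = "U \<inter> I0 \<noteq> {}"
  have covi: "i \<in> I0 \<union> I1" and covj: "j \<in> I0 \<union> I1" using U0 ij by blast+
  have iU: "i \<notin> U" "i \<notin> insert j U" and jU: "j \<notin> U" using U ij by auto
  have Sd: "U \<subseteq> I0 \<union> I1" "insert i U \<subseteq> I0 \<union> I1" "insert j U \<subseteq> I0 \<union> I1" "insert i (insert j U) \<subseteq> I0 \<union> I1"
    using U U0 ij by auto
  have r1: "rk I0 I1 (insert i U) = min ?m (?a + of_bool (i \<in> I1) + of_bool (?e \<or> i \<notin> I1))"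
    by (rule rk_insert[OF fin1 iU(1) covi dis])
  have r2: "rk I0 I1 (insert j U) = min ?m (?a + of_bool (j \<in> I1) + of_bool (?e \<or> j \<notin> I1))"
    by (rule rk_insert[OF fin1 jU covj dis])
  have "rk I0 I1 (insert i (insert j U)) = min ?m (card (insert j U \<inter> I1) + of_bool (i \<in> I1) + of_bool (insert j U \<inter> I0 \<noteq> {} \<or> i \<notin> I1))"
    by (rule rk_insert[OF fin1 iU(2) covi dis])
  also have "card (insert j U \<inter> I1) = ?a + of_bool (j \<in> I1)"
  proof (cases "j \<in> I1")
    case True
    then have "insert j U \<inter> I1 = insert j (U \<inter> I1)" by auto
    then show ?thesis using True jU fin1 by simp
  next
    case False
    then have "insert j U \<inter> I1 = U \<inter> I1" by auto
    then show ?thesis using False by simp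
  qed
  also have "(insert j U \<inter> I0 \<noteq> {} \<or> i \<notin> I1) = (?e \<or> \<not> (i \<in> I1) \<or> \<not> (j \<in> I1))"
    using covj dis by blast
  finally have r3: "rk I0 I1 (insert i (insert j U)) = min ?m (?a + of_bool (i \<in> I1) + of_bool (j \<in> I1) + of_bool (?e \<or> \<not> (i \<in> I1) \<or> \<not> (j \<in> I1)))"
    by (simp add: add.assoc)
  have r0: "rk I0 I1 U = min ?m (?a + of_bool ?e)" by (simp add: rk_def)
  have UI1: "U \<inter> I1 \<subseteq> I1 - {i, j}" using U by auto
  have cI1: "card (I1 - {i, j}) + of_bool (i \<in> I1) + of_bool (j \<in> I1) = ?m"
  proof -
    have "I1 = (I1 - {i, j}) \<union> (I1 \<inter> {i, j})" by auto
    then have "?m = card (I1 - {i, j}) + card (I1 \<inter> {i, j})"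
      using fin1 by (metis card_Un_disjoint Diff_disjoint Int_Diff_disjoint Int_commute finite_Diff finite_Int inf_sup_aci(1))
    moreover have "card (I1 \<inter> {i, j}) = of_bool (i \<in> I1) + of_bool (j \<in> I1)"
      using ij(3) by (cases "i \<in> I1"; cases "j \<in> I1") (auto simp: Int_insert_right)
    ultimately show ?thesis by simp
  qed
  have cA: "?a \<le> card (I1 - {i, j})" using UI1 fin1 by (intro card_mono) auto
  have ind: "of_bool (?m \<le> ?a + of_bool (i \<in> I1) + of_bool (j \<in> I1)) \<le> (if I1 - {i, j} \<subseteq> U then 1 else (0::real))"
  proof (cases "?m \<le> ?a + of_bool (i \<in> I1) + of_bool (j \<in> I1)")
    case True
    then have "card (U \<inter> I1) = card (I1 - {i, j})" using cI1 cA by simp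
    then have "U \<inter> I1 = I1 - {i, j}" using UI1 fin1 by (intro card_subset_eq) auto
    then show ?thesis by auto
  qed simp
  have ar: "real (rk I0 I1 (insert i U)) + real (rk I0 I1 (insert j U)) - real (rk I0 I1 U) - real (rk I0 I1 (insert i (insert j U)))
      \<le> of_bool (\<not> ?e) + of_bool (?m \<le> ?a + of_bool (i \<in> I1) + of_bool (j \<in> I1))"
    unfolding r0 r1 r2 r3 by (rule rk_arith) (use cI1 cA in linarith)
  have "ent (insert i U) (p_ex I0 I1 istar) + ent (insert j U) (p_ex I0 I1 istar) - ent U (p_ex I0 I1 istar)
      - ent (insert i (insert j U)) (p_ex I0 I1 istar)
      = ln 2 * (real (rk I0 I1 (insert i U)) + real (rk I0 I1 (insert j U)) - real (rk I0 I1 U) - real (rk I0 I1 (insert i (insert j U))))"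
    using ent_rank[OF fin1 dis k Sd(1)] ent_rank[OF fin1 dis k Sd(2)] ent_rank[OF fin1 dis k Sd(3)] ent_rank[OF fin1 dis k Sd(4)]
    by (simp add: algebra_simps)
  also have "\<dots> \<le> ln 2 * ((if U \<inter> I0 = {} then 1 else 0) + (if I1 - {i, j} \<subseteq> U then 1 else 0))"
  proof (rule mult_left_mono)
    have "of_bool (\<not> ?e) = (if U \<inter> I0 = {} then 1 else (0::real))" by simp
    then show "real (rk I0 I1 (insert i U)) + real (rk I0 I1 (insert j U)) - real (rk I0 I1 U) - real (rk I0 I1 (insert i (insert j U)))
      \<le> (if U \<inter> I0 = {} then 1 else 0) + (if I1 - {i, j} \<subseteq> U then 1 else 0)"
      using ar ind by linarith
  qed simp
  finally show ?thesis .
qed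


lemma cond_mi_bound:
  assumes U0: "I0 \<union> I1 = {..<d}" and dis: "I0 \<inter> I1 = {}" and k: "istar \<in> I1"
    and ij: "i < d" "j < d" "i \<noteq> j" and t: "0 < t"
  shows "cond_mi i j ({..<d} - {i, j}) (noised d t (p_ex I0 I1 istar))
    \<le> (exp (- t))\<^sup>2 * ln 2 * ((1 - exp (- t)) ^ (card I0 - 2) + (exp (- t)) ^ (card I1 - 2))"
proof -
  define K where "K = {..<d} - {i, j}"
  define q where "q = 1 - exp (- t)"
  define s where "s = exp (- t)"
  have q: "0 < q" "q < 1" using t by (auto simp: q_def)
  have sq: "s = 1 - q" by (simp add: q_def s_def)
  have fin1: "finite I1" and fin0: "finite I0" using U0 by (metis finite_Un finite_lessThan)+
  have finK: "finite K" by (simp add: K_def)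
  let ?p = "p_ex I0 I1 istar"
  have finp: "finite (set_pmf ?p)"
  proof -
    have "istar \<notin> I0" using dis k by auto
    moreover have "finite (set_pmf (U1 I1))" by (rule finite_set_Pi_pmf[OF fin1]) simp
    ultimately show ?thesis using p_ex_repr[OF fin1 k] by simp
  qed
  have "cond_mi i j K (noised d t ?p) = SA q K (\<lambda>U. s\<^sup>2 *
      (ent (insert i U) ?p + ent (insert j U) ?p - ent U ?p - ent (insert i (insert j U)) ?p))"
    unfolding q_def s_def by (rule cond_mi_noised[OF ij K_def finp t])
  also have "\<dots> \<le> SA q K (\<lambda>U. s\<^sup>2 * ln 2 * ((if U \<inter> I0 = {} then 1 else 0) + (if I1 - {i, j} \<subseteq> U then 1 else 0)))"
  proof (rule SA_mono[OF finK])
    fix U assume "U \<subseteq> K"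
    then have "U \<subseteq> {..<d} - {i, j}" by (simp add: K_def)
    from Ic_bound[OF U0 dis k ij this] show "s\<^sup>2 * (ent (insert i U) ?p + ent (insert j U) ?p - ent U ?p - ent (insert i (insert j U)) ?p)
        \<le> s\<^sup>2 * ln 2 * ((if U \<inter> I0 = {} then 1 else 0) + (if I1 - {i, j} \<subseteq> U then 1 else 0))"
      by (simp add: mult.assoc mult_left_mono)
  qed
  also have "\<dots> = s\<^sup>2 * ln 2 * (q ^ card (K \<inter> I0) + (if I1 - {i, j} \<subseteq> K then (1 - q) ^ card (I1 - {i, j}) else 0))"
    by (simp add: SA_cmult SA_add SA_disjoint[OF finK q] SA_subset[OF finK q] fin1)
  also have "\<dots> \<le> s\<^sup>2 * ln 2 * (q ^ (card I0 - 2) + s ^ (card I1 - 2))"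
  proof (intro mult_left_mono add_mono)
    have "card I0 - 2 \<le> card (K \<inter> I0)"
    proof -
      have "I0 - {i, j} \<subseteq> K \<inter> I0" using U0 by (auto simp: K_def)
      then have "card (I0 - {i, j}) \<le> card (K \<inter> I0)" using finK by (intro card_mono) auto
      moreover have "card I0 - card {i, j} \<le> card (I0 - {i, j})" by (rule diff_card_le_card_Diff) simp
      moreover have "card {i, j} = 2" using ij by simp
      ultimately show ?thesis by simp
    qed
    then show "q ^ card (K \<inter> I0) \<le> q ^ (card I0 - 2)" using q by (intro power_decreasing) auto
    have "card I1 - 2 \<le> card (I1 - {i, j})"
    proof -
      have "card I1 - card {i, j} \<le> card (I1 - {i, j})" by (rule diff_card_le_card_Diff) simp
      moreover have "card {i, j} = 2" using ij by simp
      ultimately show ?thesis by simp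
    qed
    then have "(1 - q) ^ card (I1 - {i, j}) \<le> s ^ (card I1 - 2)" unfolding sq using q by (intro power_decreasing) auto
    moreover have "0 \<le> s ^ (card I1 - 2)" by (simp add: s_def)
    ultimately show "(if I1 - {i, j} \<subseteq> K then (1 - q) ^ card (I1 - {i, j}) else 0) \<le> s ^ (card I1 - 2)" by simp
  qed simp_all
  finally show ?thesis by (simp add: K_def s_def q_def)
qed

lemma calI_bound:
  assumes U0: "I0 \<union> I1 = {..<d}" and dis: "I0 \<inter> I1 = {}" and k: "istar \<in> I1" and t: "0 < t"
  shows "calI d (p_ex I0 I1 istar) t
    \<le> real d ^ 2 * ((exp (- t))\<^sup>2 * ln 2 * ((1 - exp (- t)) ^ (card I0 - 2) + (exp (- t)) ^ (card I1 - 2)))"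
proof -
  let ?B = "(exp (- t))\<^sup>2 * ln 2 * ((1 - exp (- t)) ^ (card I0 - 2) + (exp (- t)) ^ (card I1 - 2))"
  have B0: "0 \<le> ?B" using t by simp
  have "calI d (p_ex I0 I1 istar) t \<le> (\<Sum>i<d. \<Sum>j\<in>{..<d} - {i}. ?B)"
    unfolding calI_def
  proof (intro sum_mono)
    fix i j assume "i \<in> {..<d}" "j \<in> {..<d} - {i}"
    then show "cond_mi i j ({..<d} - {i, j}) (noised d t (p_ex I0 I1 istar)) \<le> ?B"
      by (intro cond_mi_bound[OF U0 dis k _ _ _ t]) auto
  qed
  also have "\<dots> = real d * (real d - 1) * ?B"
  proof -
    have "card ({..<d} - {i}) = d - 1" if "i < d" for i using that by simp
    then have "(\<Sum>i<d. \<Sum>j\<in>{..<d} - {i}. ?B) = (\<Sum>i<d. real (d - 1) * ?B)" by simp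
    also have "\<dots> = real d * (real d - 1) * ?B"
      by (cases d) auto
    finally show ?thesis .
  qed
  also have "\<dots> \<le> real d ^ 2 * ?B"
    using B0 by (intro mult_right_mono) (auto simp: power2_eq_square intro: mult_left_mono)
  finally show ?thesis .
qed


lemma exp_neg_at_top: "((\<lambda>t::real. exp (- t)) \<longlongrightarrow> 0) at_top"
  by (rule filterlim_compose[OF exp_at_bot filterlim_uminus_at_bot_at_top])

lemma inv_cancel_Suc: "real (Suc k) * (inverse (real (Suc k)) * z) = z"
  by (simp del: of_nat_Suc)

lemma inv_cancel_Suc2: "real (Suc k) * (y * (inverse (real (Suc k)) * z)) = y * z"
  by (simp del: of_nat_Suc)

lemma FTC_part:
  fixes N M :: nat
  assumes M: "M \<ge> 1"
  shows "(\<integral>\<^sup>+t. ennreal ((exp (- t))\<^sup>2 * (1 - exp (- t)) ^ N + (1 - exp (- t)) * exp (- t) ^ M) * indicator {0..} t \<partial>lborel)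
    = ennreal (1 / ((N + 1) * (N + 2)) + 1 / (M * (M + 1)))"
proof -
  define f where "f = (\<lambda>t::real. (exp (- t))\<^sup>2 * (1 - exp (- t)) ^ N + (1 - exp (- t)) * exp (- t) ^ M)"
  define F where "F = (\<lambda>t::real. inverse (N + 1) * (1 - exp (- t)) ^ (N + 1) - inverse (N + 2) * (1 - exp (- t)) ^ (N + 2)
      - inverse M * exp (- t) ^ M + inverse (M + 1) * exp (- t) ^ (M + 1))"
  have D: "DERIV F x :> f x" for x
    unfolding F_def f_def
    apply (rule derivative_eq_intros refl)+
    using M apply (cases M; simp del: of_nat_add of_nat_Suc)
    apply (simp add: power2_eq_square algebra_simps inv_cancel_Suc inv_cancel_Suc2 del: of_nat_add of_nat_Suc)
    done
  define T where "T = inverse (real (N + 1)) * (1 - 0) ^ (N + 1) - inverse (real (N + 2)) * (1 - 0) ^ (N + 2)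
      - inverse (real M) * 0 ^ M + inverse (real (M + 1)) * (0::real) ^ (M + 1)"
  have lim: "(F \<longlongrightarrow> T) at_top"
    unfolding F_def T_def
    by (intro tendsto_intros exp_neg_at_top)
  have meas: "f \<in> borel_measurable borel"
    unfolding f_def by (intro borel_measurable_continuous_onI continuous_intros)
  have nonneg: "0 \<le> f x" if "0 \<le> x" for x
    unfolding f_def using that by (intro add_nonneg_nonneg mult_nonneg_nonneg zero_le_power) auto
  have "(\<integral>\<^sup>+t. ennreal (f t) * indicator {0..} t \<partial>lborel) = ennreal (T - F 0)"
    by (rule nn_integral_FTC_atLeast[OF meas D nonneg lim])
  also have "T - F 0 = 1 / ((N + 1) * (N + 2)) + 1 / (M * (M + 1))"
    using M by (simp add: F_def T_def field_simps)
  finally show ?thesis by (simp add: f_def)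
qed


lemma min_le_exp:
  fixes t :: real assumes t: "0 \<le> t"
  shows "min 1 t \<le> 2 * (1 - exp (- t))"
proof -
  have e: "1 + t \<le> exp t" by (rule exp_ge_add_one_self)
  have "exp (- t) = 1 / exp t" by (simp add: exp_minus field_simps)
  also have "\<dots> \<le> 1 / (1 + t)" using e t by (intro divide_left_mono) auto
  finally have "exp (- t) \<le> 1 / (1 + t)" .
  then have "t / (1 + t) \<le> 1 - exp (- t)" using t by (simp add: field_simps)
  moreover have "min 1 t \<le> 2 * (t / (1 + t))"
  proof (cases "t \<le> 1")
    case True
    then have "t * t \<le> t" using t mult_left_le_one_le[of t t] by simp
    then show ?thesis using True t by (auto simp: field_simps min_def)
  qed (use t in \<open>auto simp: field_simps min_def\<close>)
  ultimately have "2 * (t / (1 + t)) \<le> 2 * (1 - exp (- t))" by simp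
  with \<open>min 1 t \<le> 2 * (t / (1 + t))\<close> show ?thesis by (rule order_trans)
qed

lemma eff_bound:
  assumes U0: "I0 \<union> I1 = {..<d}" and dis: "I0 \<inter> I1 = {}" and k: "istar \<in> I1"
    and n2: "card I0 \<ge> 2" and m2: "card I1 \<ge> 2"
  shows "eff_total_corr d (p_ex I0 I1 istar)
    \<le> ennreal (2 * ln 2 * real d ^ 2 * (1 / (card I0 * (card I0 + 1)) + 1 / (card I1 * (card I1 + 1))))"
proof -
  let ?n = "card I0" and ?m = "card I1"
  define N where "N = ?n - 1"
  have Nn: "N + 1 = ?n" "N + 2 = ?n + 1" using n2 by (auto simp: N_def)
  define Kc where "Kc = 2 * ln 2 * real d ^ 2"
  have Kc0: "0 \<le> Kc" by (simp add: Kc_def)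
  define f where "f = (\<lambda>t::real. (exp (- t))\<^sup>2 * (1 - exp (- t)) ^ N + (1 - exp (- t)) * exp (- t) ^ ?m)"
  have pw: "min 1 t * calI d (p_ex I0 I1 istar) t \<le> Kc * f t" if t: "0 < t" for t
  proof -
    define q where "q = 1 - exp (- t)"
    define s where "s = exp (- t)"
    have q0: "0 \<le> q" using t by (simp add: q_def)
    have s0: "0 \<le> s" by (simp add: s_def)
    define B where "B = s\<^sup>2 * ln 2 * (q ^ (?n - 2) + s ^ (?m - 2))"
    have B0: "0 \<le> B" using q0 s0 by (simp add: B_def)
    have cI: "calI d (p_ex I0 I1 istar) t \<le> real d ^ 2 * B"
      using calI_bound[OF U0 dis k t] by (simp add: B_def q_def s_def)
    have mn: "0 \<le> min 1 t" "min 1 t \<le> 2 * q" using t min_le_exp[of t] by (auto simp: q_def)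
    have "min 1 t * calI d (p_ex I0 I1 istar) t \<le> min 1 t * (real d ^ 2 * B)"
      using cI mn by (intro mult_left_mono) auto
    also have "\<dots> \<le> 2 * q * (real d ^ 2 * B)"
      using mn B0 by (intro mult_right_mono) auto
    also have "\<dots> = Kc * (s\<^sup>2 * (q * q ^ (?n - 2)) + q * (s\<^sup>2 * s ^ (?m - 2)))"
      by (simp add: Kc_def B_def algebra_simps)
    also have "q * q ^ (?n - 2) = q ^ N" using n2 by (simp add: N_def power_Suc[symmetric] Suc_diff_Suc numeral_2_eq_2)
    also have "s\<^sup>2 * s ^ (?m - 2) = s ^ ?m"
    proof -
      have "?m = 2 + (?m - 2)" using m2 by simp
      then show ?thesis by (metis power_add)
    qed
    finally show ?thesis by (simp add: f_def q_def s_def)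
  qed
  have "eff_total_corr d (p_ex I0 I1 istar) \<le> (\<integral>\<^sup>+t. ennreal (Kc * f t) * indicator {0..} t \<partial>lborel)"
    unfolding eff_total_corr_def
  proof (rule nn_integral_mono)
    fix t :: real
    show "ennreal (min 1 t * calI d (p_ex I0 I1 istar) t) * indicator {0<..} t \<le> ennreal (Kc * f t) * indicator {0..} t"
    proof (cases "0 < t")
      case True
      then show ?thesis using pw[OF True] by (simp add: ennreal_leI)
    qed (simp add: indicator_def)
  qed
  also have "\<dots> = ennreal Kc * (\<integral>\<^sup>+t. ennreal (f t) * indicator {0..} t \<partial>lborel)"
  proof -
    have meas: "(\<lambda>t. ennreal (f t) * indicator {0..} t) \<in> borel_measurable lborel"
      unfolding f_def by measurable
    have "(\<integral>\<^sup>+t. ennreal (Kc * f t) * indicator {0..} t \<partial>lborel)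
        = (\<integral>\<^sup>+t. ennreal Kc * (ennreal (f t) * indicator {0..} t) \<partial>lborel)"
      using Kc0 by (simp add: ennreal_mult' mult.assoc)
    also have "\<dots> = ennreal Kc * (\<integral>\<^sup>+t. ennreal (f t) * indicator {0..} t \<partial>lborel)"
      by (rule nn_integral_cmult[OF meas])
    finally show ?thesis .
  qed
  also have "(\<integral>\<^sup>+t. ennreal (f t) * indicator {0..} t \<partial>lborel) = ennreal (1 / ((N + 1) * (N + 2)) + 1 / (?m * (?m + 1)))"
    unfolding f_def by (rule FTC_part) (use m2 in simp)
  also have "ennreal Kc * \<dots> = ennreal (Kc * (1 / ((N + 1) * (N + 2)) + 1 / (?m * (?m + 1))))"
    using Kc0 by (simp add: ennreal_mult)
  also have "(N + 1) * (N + 2) = ?n * (?n + 1)" using Nn by simp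
  finally show ?thesis by (simp add: Kc_def)
qed


lemma sq_bound:
  fixes r0 d n :: real
  assumes "0 < r0" "0 < d" "r0 * d \<le> n"
  shows "d ^ 2 * (1 / (n * (n + 1))) \<le> 1 / r0 ^ 2"
proof -
  have n0: "0 < n" using assms mult_pos_pos[of r0 d] by linarith
  have "(r0 * d) ^ 2 \<le> n ^ 2" using assms by (intro power_mono) auto
  also have "\<dots> \<le> n * (n + 1)" using n0 by (simp add: power2_eq_square algebra_simps)
  finally have "r0 ^ 2 * d ^ 2 \<le> n * (n + 1)" by (simp add: power_mult_distrib)
  moreover have "0 < n + n * n" using n0 by (simp add: add_pos_pos)
  ultimately show ?thesis using assms n0 by (simp add: field_simps divide_le_eq_1)
qed

theorem proposition5:
  fixes r0 :: real
  assumes "0 < r0" and "r0 \<le> 1/2"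
  shows "\<exists>c C :: real. c > 0 \<and> C > 0 \<and> (\<exists>d0 :: nat. \<forall>d \<ge> d0. \<forall>I0 I1 istar.
           I0 \<union> I1 = {..<d} \<and> I0 \<inter> I1 = {} \<and>
           real (card I0) \<ge> r0 * real d \<and> real (card I1) \<ge> r0 * real d \<and> istar \<in> I1 \<longrightarrow>
           c * real d \<le> dual_total_corr d (p_ex I0 I1 istar) \<and>
           dual_total_corr d (p_ex I0 I1 istar) \<le> C * real d \<and>
           c * real d \<le> total_corr d (p_ex I0 I1 istar) \<and>
           total_corr d (p_ex I0 I1 istar) \<le> C * real d \<and>
           eff_total_corr d (p_ex I0 I1 istar) \<le> ennreal C)"
proof -
  define c where "c = r0 * ln 2"
  define C where "C = 4 / r0 ^ 2"
  define d0 where "d0 = nat \<lceil>2 / r0\<rceil>"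
  have c0: "c > 0" using assms by (simp add: c_def)
  have C0: "C > 0" using assms by (simp add: C_def)
  have r2: "r0 ^ 2 \<le> 1" using assms by (intro power_le_one) auto
  have C1: "1 \<le> C" using r2 assms by (simp add: C_def field_simps)
  have ln2: "0 < ln (2::real)" "ln (2::real) \<le> 1" using ln_le_minus_one[of 2] by auto
  have main: "c * real d \<le> dual_total_corr d (p_ex I0 I1 istar) \<and>
           dual_total_corr d (p_ex I0 I1 istar) \<le> C * real d \<and>
           c * real d \<le> total_corr d (p_ex I0 I1 istar) \<and>
           total_corr d (p_ex I0 I1 istar) \<le> C * real d \<and>
           eff_total_corr d (p_ex I0 I1 istar) \<le> ennreal C"
    if dd: "d \<ge> d0" and U0: "I0 \<union> I1 = {..<d}" and dis: "I0 \<inter> I1 = {}"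
      and n: "real (card I0) \<ge> r0 * real d" and m: "real (card I1) \<ge> r0 * real d" and k: "istar \<in> I1"
    for d I0 I1 istar
  proof -
    have "2 / r0 \<le> real d0" unfolding d0_def by linarith
    also have "\<dots> \<le> real d" using dd by simp
    finally have "2 / r0 \<le> real d" .
    then have rd: "2 \<le> r0 * real d" using assms by (simp add: field_simps)
    have dpos: "0 < real d" using rd by (cases "d = 0") auto
    have n2: "card I0 \<ge> 2" using n rd by linarith
    have m2: "card I1 \<ge> 2" using m rd by linarith
    have ne: "I0 \<noteq> {}" using n2 by auto
    have fin1: "finite I1" and fin0: "finite I0" using U0 by (metis finite_Un finite_lessThan)+
    have nd: "card I0 + card I1 = d" using card_Un_disjoint[OF fin0 fin1 dis] U0 by simp
    have tc: "total_corr d (p_ex I0 I1 istar) = card I0 * ln 2" by (rule corr_values(1)[OF U0 dis k ne])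
    have dc: "dual_total_corr d (p_ex I0 I1 istar) = card I1 * ln 2" by (rule corr_values(2)[OF U0 dis k ne])
    have lo: "c * real d \<le> real N * ln 2" if "r0 * real d \<le> real N" for N
      unfolding c_def using that ln2 by (simp add: mult.commute mult.left_commute mult_right_mono)
    have hi: "real N * ln 2 \<le> C * real d" if "N \<le> d" for N
    proof -
      have "real N * ln 2 \<le> real N * 1" using ln2 by (intro mult_left_mono) auto
      also have "\<dots> \<le> real d" using that by simp
      also have "\<dots> \<le> C * real d" using C1 dpos by simp
      finally show ?thesis .
    qed
    have eb: "eff_total_corr d (p_ex I0 I1 istar) \<le> ennreal C"
    proof -
      have "eff_total_corr d (p_ex I0 I1 istar)
          \<le> ennreal (2 * ln 2 * real d ^ 2 * (1 / (card I0 * (card I0 + 1)) + 1 / (card I1 * (card I1 + 1))))"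
        by (rule eff_bound[OF U0 dis k n2 m2])
      also have "2 * ln 2 * real d ^ 2 * (1 / (card I0 * (card I0 + 1)) + 1 / (card I1 * (card I1 + 1)))
          = 2 * ln 2 * (real d ^ 2 * (1 / (real (card I0) * (real (card I0) + 1)))
            + real d ^ 2 * (1 / (real (card I1) * (real (card I1) + 1))))"
        by (simp add: algebra_simps)
      also have "\<dots> \<le> 2 * 1 * (1 / r0 ^ 2 + 1 / r0 ^ 2)"
        using sq_bound[OF assms(1) dpos n] sq_bound[OF assms(1) dpos m] ln2
        by (intro mult_mono add_mono) auto
      also have "\<dots> = C" by (simp add: C_def)
      finally show ?thesis by (simp add: ennreal_leI)
    qed
    have "card I0 \<le> d" "card I1 \<le> d" using nd by linarith+
    then show ?thesis
      unfolding tc dc using lo[OF n] lo[OF m] hi[of "card I0"] hi[of "card I1"] eb by (intro conjI)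
  qed
  have M: "\<forall>d \<ge> d0. \<forall>I0 I1 istar.
           I0 \<union> I1 = {..<d} \<and> I0 \<inter> I1 = {} \<and>
           real (card I0) \<ge> r0 * real d \<and> real (card I1) \<ge> r0 * real d \<and> istar \<in> I1 \<longrightarrow>
           c * real d \<le> dual_total_corr d (p_ex I0 I1 istar) \<and>
           dual_total_corr d (p_ex I0 I1 istar) \<le> C * real d \<and>
           c * real d \<le> total_corr d (p_ex I0 I1 istar) \<and>
           total_corr d (p_ex I0 I1 istar) \<le> C * real d \<and>
           eff_total_corr d (p_ex I0 I1 istar) \<le> ennreal C"
  proof (intro allI impI)
    fix d I0 I1 istar
    assume d: "d0 \<le> d" and H: "I0 \<union> I1 = {..<d} \<and> I0 \<inter> I1 = {} \<and>
           real (card I0) \<ge> r0 * real d \<and> real (card I1) \<ge> r0 * real d \<and> istar \<in> I1"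
    from H have "I0 \<union> I1 = {..<d}" "I0 \<inter> I1 = {}" "real (card I0) \<ge> r0 * real d"
      "real (card I1) \<ge> r0 * real d" "istar \<in> I1" by auto
    from main[OF d this] show "c * real d \<le> dual_total_corr d (p_ex I0 I1 istar) \<and>
           dual_total_corr d (p_ex I0 I1 istar) \<le> C * real d \<and>
           c * real d \<le> total_corr d (p_ex I0 I1 istar) \<and>
           total_corr d (p_ex I0 I1 istar) \<le> C * real d \<and>
           eff_total_corr d (p_ex I0 I1 istar) \<le> ennreal C" .
  qed
  show ?thesis
    by (rule exI[of _ c], rule exI[of _ C]) (intro conjI c0 C0 exI[of _ d0] M)
qed


end
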